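(* Let $\Psi\subseteq\Omega$ be nonempty, $D=D(\Psi)$, $B\subseteq D$, and let $c=(c_{\underline\psi})_\Psi\in C^\perp(V_B,\Psi)$, i.e. $\sum_{\underline\psi\in\Psi}c_{\underline\psi}\underline\psi^{\underline b}=0$ for all $\underline b\in B$. Let $h=(h_{\underline d})_D=\mathcal{P}_\Psi(c)$ (so $c=\mathcal{C}_\Psi(h)$). Let $\emptyset\neq\Phi\subseteq\Psi$ with $D(\Phi)\subseteq B$, let $e=(e_{\underline\psi})_\Psi\in V_\Psi$ with $e_{\underline\psi}=0$ for $\underline\psi\notin\Phi$, let $r=c+e$, and put $\tilde r_{\underline d}=\sum_{\underline\psi\in\Psi}r_{\underline\psi}\underline\psi^{\underline d}$ for $\underline d\in D$. Then: (i) $h_{\underline b}=0$ and $\tilde r_{\underline b}=\sum_{\underline\phi\in\Phi}e_{\underline\phi}\underline\phi^{\underline b}$ for all $\underline b\in B$; (ii) if $(k_{\underline a})_A=\mathcal{E}_\Phi\big((\tilde r_{\underline d})_{\underline d\in D(\Phi)}\big)$, then $h_{\underline d}=\tilde r_{\underline d}-k_{\underline d}$ for all $\underline d\in D$; (iii) $\mathcal{C}_\Phi\big((\tilde r_{\underline d})_{\underline d\in D(\Phi)}\big)=(e_{\underline\phi})_{\underline\phi\in\Phi}$, hence $c$ is recovered as $r$ minus the extension by zero of this vector.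
   Context: Let $q$ be a prime power, $N\ge1$, $A=\{0,\dots,q-1\}^N$, $\Omega=\mathbb{F}_q^N$, $V_S$ the $\mathbb{F}_q$-vector space of vectors indexed by a finite set $S$; $\underline\psi^{\underline d}=\psi_1^{d_1}\cdots\psi_N^{d_N}$ with $0^0=1$. Fix a monomial order $\preceq$ on $\mathbb{F}_q[x_1,\dots,x_N]$. For nonempty $\Theta\subseteq\Omega$: $Z_\Theta$ is the ideal of polynomials vanishing on $\Theta$; the delta set $D(\Theta)$ is the set of $\underline d\in\mathbb{N}_0^N$ with $\underline x^{\underline d}$ not the leading monomial of a nonzero element of $Z_\Theta$ (note $D(\Theta)\subseteq A$, and $D(\Phi)\subseteq D(\Psi)$ for $\Phi\subseteq\Psi$); $\mathcal{P}_\Theta:V_\Theta\to V_{D(\Theta)}$, $(c_{\underline\theta})\mapsto(\sum_{\underline\theta\in\Theta}c_{\underline\theta}\underline\theta^{\underline d})_{\underline d\in D(\Theta)}$ is an isomorphism and $\mathcal{C}_\Theta=\mathcal{P}_\Theta^{-1}$, which equals $\mathcal{R}_\Theta\circ\mathcal{F}^{-1}\circ\mathcal{E}_\Theta$ where $\mathcal{R}_\Theta$ is restriction to $\Theta$, $\mathcal{F}^{-1}$ is the generalized inverse DFT $V_A\to V_\Omega$, and $\mathcal{E}_\Theta:V_{D(\Theta)}\to V_A$ is the extension map: $(h_{\underline d})\mapsto(h_{\underline a})_A$ with $h_{\underline a}=\sum_{\underline d\in D(\Theta)}v^{(\underline a)}_{\underline d}h_{\underline d}$, where $\sum_{\underline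 d}v^{(\underline a)}_{\underline d}\underline x^{\underline d}$ is the remainder of $\underline x^{\underline a}$ on division by a Gröbner basis of $Z_\Theta$. For $B\subseteq D(\Psi)$, $C^\perp(V_B,\Psi)=\{(c_{\underline\psi})_\Psi:\sum_{\underline\psi}c_{\underline\psi}\underline\psi^{\underline b}=0\ \forall\underline b\in B\}$. *)

theory Defs
  imports Main
begin

text \<open>Points of \<Omega> = F_q^N are functions 'n \<Rightarrow> 'a ('n a finite index type of size N,
  'a a finite field with q elements).
  Polynomials in F_q[x_1..x_N] are finitely supported coefficient functions.\<close>

definition mono_val :: "('n::finite \<Rightarrow> 'a::field) \<Rightarrow> ('n \<Rightarrow> nat) \<Rightarrow> 'a" where
  "mono_val \<theta> d = (\<Prod>i\<in>UNIV. \<theta> i ^ d i)"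

definition is_poly :: "(('n::finite \<Rightarrow> nat) \<Rightarrow> 'a::field) \<Rightarrow> bool" where
  "is_poly f \<longleftrightarrow> finite {d. f d \<noteq> 0}"

definition poly_eval :: "(('n::finite \<Rightarrow> nat) \<Rightarrow> 'a::field) \<Rightarrow> ('n \<Rightarrow> 'a) \<Rightarrow> 'a" where
  "poly_eval f \<theta> = (\<Sum>d\<in>{d. f d \<noteq> 0}. f d * mono_val \<theta> d)"

definition vanish_ideal :: "('n::finite \<Rightarrow> 'a::field) set \<Rightarrow> (('n \<Rightarrow> nat) \<Rightarrow> 'a) set" where
  "vanish_ideal \<Theta> = {f. is_poly f \<and> (\<forall>\<theta>\<in>\<Theta>. poly_eval f \<theta> = 0)}"

text \<open>Monomial orders on exponent vectors (ord a b means x^a \<preceq> x^b).\<close>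
definition monomial_order :: "(('n::finite \<Rightarrow> nat) \<Rightarrow> ('n \<Rightarrow> nat) \<Rightarrow> bool) \<Rightarrow> bool" where
  "monomial_order ord \<longleftrightarrow>
     (\<forall>a. ord a a) \<and> (\<forall>a b. ord a b \<and> ord b a \<longrightarrow> a = b) \<and>
     (\<forall>a b c. ord a b \<and> ord b c \<longrightarrow> ord a c) \<and> (\<forall>a b. ord a b \<or> ord b a) \<and>
     wf {(a, b). ord a b \<and> a \<noteq> b} \<and>
     (\<forall>a. ord (\<lambda>_. 0) a) \<and>
     (\<forall>a b c. ord a b \<longrightarrow> ord (\<lambda>i. a i + c i) (\<lambda>i. b i + c i))"

definition lead_mono :: "(('n::finite \<Rightarrow> nat) \<Rightarrow> ('n \<Rightarrow> nat) \<Rightarrow> bool) \<Rightarrow> (('n \<Rightarrow> nat) \<Rightarrow> 'a::field) \<Rightarrow> ('n \<Rightarrow> nat)" where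
  "lead_mono ord f = (THE d. f d \<noteq> 0 \<and> (\<forall>d'. f d' \<noteq> 0 \<longrightarrow> ord d' d))"

definition delta_set :: "(('n::finite \<Rightarrow> nat) \<Rightarrow> ('n \<Rightarrow> nat) \<Rightarrow> bool) \<Rightarrow> ('n \<Rightarrow> 'a::field) set \<Rightarrow> ('n \<Rightarrow> nat) set" where
  "delta_set ord \<Theta> = {d. \<not> (\<exists>f\<in>vanish_ideal \<Theta>. f \<noteq> (\<lambda>_. 0) \<and> lead_mono ord f = d)}"

text \<open>P_\<Theta>: (c_\<theta>) \<mapsto> (\<Sum>_\<theta> c_\<theta> \<theta>^d)_d (we compute it for every d; only d \<in> D(\<Theta>) matters).\<close>
definition P_map :: "('n::finite \<Rightarrow> 'a::field) set \<Rightarrow> (('n \<Rightarrow> 'a) \<Rightarrow> 'a) \<Rightarrow> ('n \<Rightarrow> nat) \<Rightarrow> 'a" where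
  "P_map \<Theta> c = (\<lambda>d. \<Sum>\<theta>\<in>\<Theta>. c \<theta> * mono_val \<theta> d)"

definition C_map :: "(('n::finite \<Rightarrow> nat) \<Rightarrow> ('n \<Rightarrow> nat) \<Rightarrow> bool) \<Rightarrow> ('n \<Rightarrow> 'a::field) set \<Rightarrow> (('n \<Rightarrow> nat) \<Rightarrow> 'a) \<Rightarrow> ('n \<Rightarrow> 'a) \<Rightarrow> 'a" where
  "C_map ord \<Theta> h = (THE c. (\<forall>x. x \<notin> \<Theta> \<longrightarrow> c x = 0) \<and> (\<forall>d\<in>delta_set ord \<Theta>. P_map \<Theta> c d = h d))"

text \<open>Remainder of x^a on division by a Groebner basis of Z_\<Theta>, characterised as the unique
  normal form: polynomial supported in D(\<Theta>) congruent to x^a modulo Z_\<Theta>.\<close>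
definition remainder :: "(('n::finite \<Rightarrow> nat) \<Rightarrow> ('n \<Rightarrow> nat) \<Rightarrow> bool) \<Rightarrow> ('n \<Rightarrow> 'a::field) set \<Rightarrow> ('n \<Rightarrow> nat) \<Rightarrow> (('n \<Rightarrow> nat) \<Rightarrow> 'a)" where
  "remainder ord \<Theta> a = (THE v. is_poly v \<and> {d. v d \<noteq> 0} \<subseteq> delta_set ord \<Theta> \<and>
       (\<lambda>d. (if d = a then 1 else 0) - v d) \<in> vanish_ideal \<Theta>)"

text \<open>Extension map E_\<Theta>: V_{D(\<Theta>)} \<rightarrow> V_A (we compute it for every a; only a \<in> A matters).\<close>
definition ext_map :: "(('n::finite \<Rightarrow> nat) \<Rightarrow> ('n \<Rightarrow> nat) \<Rightarrow> bool) \<Rightarrow> ('n \<Rightarrow> 'a::field) set \<Rightarrow> (('n \<Rightarrow> nat) \<Rightarrow> 'a) \<Rightarrow> ('n \<Rightarrow> nat) \<Rightarrow> 'a" where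
  "ext_map ord \<Theta> h = (\<lambda>a. \<Sum>d\<in>delta_set ord \<Theta>. remainder ord \<Theta> a d * h d)"

definition Cperp :: "('n::finite \<Rightarrow> nat) set \<Rightarrow> ('n \<Rightarrow> 'a::field) set \<Rightarrow> (('n \<Rightarrow> 'a) \<Rightarrow> 'a) set" where
  "Cperp B \<Psi> = {c. \<forall>b\<in>B. (\<Sum>\<psi>\<in>\<Psi>. c \<psi> * mono_val \<psi> b) = 0}"

end

theory Submission
  imports Defs "HOL-Library.FuncSet"
begin

lemma mono_val_add: "mono_val \<theta> (\<lambda>i. a i + b i) = mono_val \<theta> a * mono_val \<theta> b"
  by (simp add: mono_val_def power_add prod.distrib)

lemma mono_val_zero: "mono_val \<theta> (\<lambda>_. 0) = 1"
  by (simp add: mono_val_def)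

lemma mono_val_unit: "mono_val \<theta> (\<lambda>j. if j = i then 1 else 0) = \<theta> i"
proof -
  have "(\<Prod>j\<in>UNIV. \<theta> j ^ (if j = i then 1 else 0)) = (\<Prod>j\<in>UNIV. if j = i then \<theta> j else 1)"
    by (rule prod.cong) auto
  also have "\<dots> = \<theta> i" by (simp add: prod.delta)
  finally show ?thesis by (simp add: mono_val_def)
qed

lemma poly_eval_eq:
  assumes "finite S" "{d. f d \<noteq> 0} \<subseteq> S"
  shows "poly_eval f \<theta> = (\<Sum>d\<in>S. f d * mono_val \<theta> d)"
  unfolding poly_eval_def
  by (rule sum.mono_neutral_left) (use assms in auto)

lemma Z_iff:
  assumes "finite S" "{d. f d \<noteq> 0} \<subseteq> S"
  shows "f \<in> vanish_ideal \<Theta> \<longleftrightarrow> (\<forall>\<theta>\<in>\<Theta>. (\<Sum>d\<in>S. f d * mono_val \<theta> d) = 0)"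
proof -
  have "is_poly f" using assms finite_subset unfolding is_poly_def by blast
  then show ?thesis using poly_eval_eq[OF assms] unfolding vanish_ideal_def by simp
qed

lemma Z_diff:
  assumes "f \<in> vanish_ideal \<Theta>" "g \<in> vanish_ideal \<Theta>"
  shows "(\<lambda>d. f d - g d) \<in> vanish_ideal \<Theta>"
proof -
  let ?S = "{d. f d \<noteq> 0} \<union> {d. g d \<noteq> 0}"
  have S: "finite ?S" using assms by (auto simp: vanish_ideal_def is_poly_def)
  have f: "\<forall>\<theta>\<in>\<Theta>. (\<Sum>d\<in>?S. f d * mono_val \<theta> d) = 0" using Z_iff[OF S, of f] assms by auto
  have g: "\<forall>\<theta>\<in>\<Theta>. (\<Sum>d\<in>?S. g d * mono_val \<theta> d) = 0" using Z_iff[OF S, of g] assms by auto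
  show ?thesis
    by (subst Z_iff[OF S]) (use f g in \<open>auto simp: left_diff_distrib sum_subtractf\<close>)
qed

lemma mo_props:
  assumes "monomial_order ord"
  shows "\<And>a. ord a a" "\<And>a b. ord a b \<Longrightarrow> ord b a \<Longrightarrow> a = b"
    "\<And>a b c. ord a b \<Longrightarrow> ord b c \<Longrightarrow> ord a c" "\<And>a b. ord a b \<or> ord b a"
proof -
  have H: "(\<forall>a. ord a a) \<and> (\<forall>a b. ord a b \<and> ord b a \<longrightarrow> a = b) \<and>
     (\<forall>a b c. ord a b \<and> ord b c \<longrightarrow> ord a c) \<and> (\<forall>a b. ord a b \<or> ord b a)"
    using assms unfolding monomial_order_def by (elim conjE) (intro conjI)
  from H show "\<And>a. ord a a" by blast
  from H show "\<And>a b. ord a b \<Longrightarrow> ord b a \<Longrightarrow> a = b" by (elim conjE) (iprover)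
  from H show "\<And>a b c. ord a b \<Longrightarrow> ord b c \<Longrightarrow> ord a c" by (elim conjE) (iprover)
  from H show "\<And>a b. ord a b \<or> ord b a" by blast
qed

lemma total_max:
  assumes mo: "monomial_order ord" and "finite X" "X \<noteq> {}"
  shows "\<exists>m\<in>X. \<forall>x\<in>X. ord x m"
  using assms(2,3)
proof (induction X rule: finite_ne_induct)
  case (singleton x) then show ?case using mo_props(1)[OF mo] by auto
next
  case (insert x F)
  then obtain m where m: "m\<in>F" "\<forall>y\<in>F. ord y m" by blast
  show ?case
  proof (cases "ord x m")
    case True then show ?thesis using m by auto
  next
    case False
    then have xm: "ord m x" using mo_props(4)[OF mo, of x m] by auto
    have "\<forall>y\<in>insert x F. ord y x"
    proof
      fix y assume "y \<in> insert x F"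
      then show "ord y x"
      proof
        assume "y = x" then show ?thesis using mo_props(1)[OF mo] by simp
      next
        assume "y \<in> F" then show ?thesis using m(2) xm mo_props(3)[OF mo] by blast
      qed
    qed
    then show ?thesis by blast
  qed
qed

lemma lead_mono_prop:
  assumes mo: "monomial_order ord" and "is_poly f" "f \<noteq> (\<lambda>_. 0)"
  shows "f (lead_mono ord f) \<noteq> 0 \<and> (\<forall>d'. f d' \<noteq> 0 \<longrightarrow> ord d' (lead_mono ord f))"
proof -
  have "finite {d. f d \<noteq> 0}" "{d. f d \<noteq> 0} \<noteq> {}" using assms by (auto simp: is_poly_def)
  then obtain m where m: "m \<in> {d. f d \<noteq> 0}" "\<forall>x\<in>{d. f d \<noteq> 0}. ord x m" using total_max[OF mo] by blast
  have uniq: "d = m" if "f d \<noteq> 0 \<and> (\<forall>d'. f d' \<noteq> 0 \<longrightarrow> ord d' d)" for d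
  proof -
    have "ord m d" using that m(1) by blast
    moreover have "ord d m" using that m(2) by blast
    ultimately show ?thesis using mo_props(2)[OF mo] by blast
  qed
  have P: "f m \<noteq> 0 \<and> (\<forall>d'. f d' \<noteq> 0 \<longrightarrow> ord d' m)" using m by blast
  have "lead_mono ord f = m" unfolding lead_mono_def
    by (rule the_equality[where P="\<lambda>d. f d \<noteq> 0 \<and> (\<forall>d'. f d' \<noteq> 0 \<longrightarrow> ord d' d)", OF P uniq])
  then show ?thesis using P by simp
qed

lemma not_in_Z:
  assumes mo: "monomial_order ord" and "is_poly w" "{d. w d \<noteq> 0} \<subseteq> delta_set ord \<Theta>"
    "w \<in> vanish_ideal \<Theta>"
  shows "w = (\<lambda>_. 0)"
proof (rule ccontr)
  assume nz: "w \<noteq> (\<lambda>_. 0)"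
  from lead_mono_prop[OF mo assms(2) nz] have "w (lead_mono ord w) \<noteq> 0" by (rule conjunct1)
  then have "lead_mono ord w \<in> {d. w d \<noteq> 0}" by simp
  then have "lead_mono ord w \<in> delta_set ord \<Theta>" using assms(3) by (rule subsetD[rotated])
  then have "\<not> (\<exists>f\<in>vanish_ideal \<Theta>. f \<noteq> (\<lambda>_. 0) \<and> lead_mono ord f = lead_mono ord w)"
    unfolding delta_set_def by simp
  moreover have "\<exists>f\<in>vanish_ideal \<Theta>. f \<noteq> (\<lambda>_. 0) \<and> lead_mono ord f = lead_mono ord w"
    using nz assms(4) by blast
  ultimately show False by contradiction
qed

lemma delta_sum:
  fixes v m :: "'b \<Rightarrow> 'a::field"
  assumes "finite S" "a \<in> S"
  shows "(\<Sum>d\<in>S. ((if d = a then 1 else 0) - v d) * m d) = m a - (\<Sum>d\<in>S. v d * m d)"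
proof -
  have "(\<Sum>d\<in>S. ((if d = a then 1 else 0) - v d) * m d) =
        (\<Sum>d\<in>S. (if d = a then m d else 0)) - (\<Sum>d\<in>S. v d * m d)"
    unfolding sum_subtractf[symmetric] by (rule sum.cong) (auto simp: left_diff_distrib)
  also have "(\<Sum>d\<in>S. (if d = a then m d else 0)) = m a"
    using assms by (simp add: sum.delta)
  finally show ?thesis .
qed


lemma nf_exists:
  fixes \<Theta> :: "('n::finite \<Rightarrow> 'a::field) set"
  assumes mo: "monomial_order ord"
  shows "\<exists>v. is_poly v \<and> {d. v d \<noteq> 0} \<subseteq> delta_set ord \<Theta> \<and>
          (\<lambda>d. (if d = a then 1 else 0) - v d) \<in> vanish_ideal \<Theta>"
proof -
  have wf: "wf {(a, b). ord a b \<and> a \<noteq> b}" using mo unfolding monomial_order_def by (elim conjE) assumption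
  show ?thesis
  proof (induction a rule: wf_induct[OF wf])
    case (1 a)
    show ?case
    proof (cases "a \<in> delta_set ord \<Theta>")
      case True
      let ?v = "\<lambda>d. if d = a then (1::'a) else 0"
      have "is_poly ?v" by (simp add: is_poly_def)
      moreover have "{d. ?v d \<noteq> 0} \<subseteq> delta_set ord \<Theta>" using True by auto
      moreover have "(\<lambda>d. (if d = a then 1 else 0) - ?v d) \<in> vanish_ideal \<Theta>"
        by (simp add: vanish_ideal_def is_poly_def poly_eval_def)
      ultimately show ?thesis by blast
    next
      case False
      then have "\<exists>f\<in>vanish_ideal \<Theta>. f \<noteq> (\<lambda>_. 0) \<and> lead_mono ord f = a"
        by (simp add: delta_set_def)
      then obtain f where f: "f \<in> vanish_ideal \<Theta>" "f \<noteq> (\<lambda>_. 0)" "lead_mono ord f = a"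
        by blast
      have fp: "is_poly f" using f(1) by (simp add: vanish_ideal_def)
      have LP: "f (lead_mono ord f) \<noteq> 0 \<and> (\<forall>d'. f d' \<noteq> 0 \<longrightarrow> ord d' (lead_mono ord f))"
        by (rule lead_mono_prop[OF mo fp f(2)])
      then have fa: "f a \<noteq> 0" and fle: "\<And>d. f d \<noteq> 0 \<Longrightarrow> ord d a"
        unfolding f(3) by blast+
      define T where "T = {d. f d \<noteq> 0} - {a}"
      have T: "finite T" using fp by (simp add: T_def is_poly_def)
      have "\<forall>t\<in>T. \<exists>v. is_poly v \<and> {d. v d \<noteq> 0} \<subseteq> delta_set ord \<Theta> \<and>
            (\<lambda>d. (if d = t then 1 else 0) - v d) \<in> vanish_ideal \<Theta>"
      proof
        fix t assume t: "t \<in> T"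
        then have "(t, a) \<in> {(a, b). ord a b \<and> a \<noteq> b}" using fle by (simp add: T_def)
        then show "\<exists>v. is_poly v \<and> {d. v d \<noteq> 0} \<subseteq> delta_set ord \<Theta> \<and>
            (\<lambda>d. (if d = t then 1 else 0) - v d) \<in> vanish_ideal \<Theta>"
          using 1 by blast
      qed
      then obtain V where V0: "\<forall>t\<in>T. is_poly (V t) \<and> {d. V t d \<noteq> 0} \<subseteq> delta_set ord \<Theta> \<and>
            (\<lambda>d. (if d = t then 1 else 0) - V t d) \<in> vanish_ideal \<Theta>"
        by (rule bchoice[THEN exE])
      have V: "is_poly (V t) \<and> {d. V t d \<noteq> 0} \<subseteq> delta_set ord \<Theta> \<and>
            (\<lambda>d. (if d = t then 1 else 0) - V t d) \<in> vanish_ideal \<Theta>" if "t \<in> T" for t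
        by (rule bspec[OF V0 that])
      define v where "v = (\<lambda>d. - (\<Sum>t\<in>T. (f t / f a) * V t d))"
      define S where "S = insert a ({d. f d \<noteq> 0} \<union> (\<Union>t\<in>T. {d. V t d \<noteq> 0}))"
      have "finite (\<Union>t\<in>T. {d. V t d \<noteq> 0})"
        using T by (rule finite_UN_I) (use V in \<open>simp add: is_poly_def\<close>)
      then have S: "finite S" using fp by (simp add: S_def is_poly_def)
      have sptv: "{d. v d \<noteq> 0} \<subseteq> (\<Union>t\<in>T. {d. V t d \<noteq> 0})"
      proof
        fix d assume "d \<in> {d. v d \<noteq> 0}"
        then have "(\<Sum>t\<in>T. f t / f a * V t d) \<noteq> 0" by (simp add: v_def)
        have "\<exists>t\<in>T. f t / f a * V t d \<noteq> 0"
        proof (rule ccontr)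
          assume "\<not> (\<exists>t\<in>T. f t / f a * V t d \<noteq> 0)"
          then have "(\<Sum>t\<in>T. f t / f a * V t d) = 0" by (intro sum.neutral) blast
          then show False using \<open>(\<Sum>t\<in>T. f t / f a * V t d) \<noteq> 0\<close> by contradiction
        qed
        then obtain t where "t\<in>T" "f t / f a * V t d \<noteq> 0" by blast
        then show "d \<in> (\<Union>t\<in>T. {d. V t d \<noteq> 0})" by auto
      qed
      have vS: "{d. v d \<noteq> 0} \<subseteq> S" using sptv by (auto simp: S_def)
      have vD: "{d. v d \<noteq> 0} \<subseteq> delta_set ord \<Theta>"
      proof
        fix d assume "d \<in> {d. v d \<noteq> 0}"
        then obtain t where t: "t \<in> T" "V t d \<noteq> 0" using sptv by blast
        have "{d. V t d \<noteq> 0} \<subseteq> delta_set ord \<Theta>" using V[OF t(1)] by (rule conjunct1[OF conjunct2])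
        then show "d \<in> delta_set ord \<Theta>" using t(2) by blast
      qed
      have vp: "is_poly v" using vS S finite_subset by (auto simp: is_poly_def)
      have aS: "a \<in> S" by (simp add: S_def)
      have TS: "T \<subseteq> S" by (auto simp: S_def T_def)
      have sptw: "{d. (if d = a then 1 else 0) - v d \<noteq> 0} \<subseteq> S"
        using vS aS by (auto split: if_splits)
      have "(\<lambda>d. (if d = a then 1 else 0) - v d) \<in> vanish_ideal \<Theta>"
      proof (subst Z_iff[OF S sptw], intro ballI)
        fix \<theta> assume th: "\<theta> \<in> \<Theta>"
        let ?m = "mono_val \<theta>"
        have Vt: "(\<Sum>d\<in>S. V t d * ?m d) = ?m t" if "t \<in> T" for t
        proof -
          have sp: "{d. V t d \<noteq> 0} \<subseteq> S" using that by (auto simp: S_def)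
          have tS: "t \<in> S" using that TS by auto
          have sp2: "{d. (if d = t then 1 else 0) - V t d \<noteq> 0} \<subseteq> S"
            using sp tS by (auto split: if_splits)
          have Z: "(\<lambda>d. (if d = t then 1 else 0) - V t d) \<in> vanish_ideal \<Theta>"
            using V[OF that] by (rule conjunct2[OF conjunct2])
          have "(\<Sum>d\<in>S. ((if d = t then 1 else 0) - V t d) * ?m d) = 0"
            using iffD1[OF Z_iff[OF S sp2] Z] th by (rule bspec)
          then show ?thesis using delta_sum[OF S tS, of "V t" ?m] by simp
        qed
        have fS: "{d. f d \<noteq> 0} \<subseteq> S" by (auto simp: S_def)
        have "(\<Sum>d\<in>S. f d * ?m d) = 0" using iffD1[OF Z_iff[OF S fS] f(1)] th by (rule bspec)
        moreover have "(\<Sum>d\<in>S. f d * ?m d) = (\<Sum>d\<in>insert a T. f d * ?m d)"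
          by (rule sum.mono_neutral_right) (use S aS TS in \<open>auto simp: T_def\<close>)
        moreover have "a \<notin> T" by (simp add: T_def)
        ultimately have fsum: "f a * ?m a + (\<Sum>t\<in>T. f t * ?m t) = 0" using T by simp
        have "(\<Sum>d\<in>S. v d * ?m d) = - (\<Sum>d\<in>S. \<Sum>t\<in>T. f t / f a * (V t d * ?m d))"
          by (simp add: v_def sum_distrib_right sum_negf mult.assoc)
        also have "\<dots> = - (\<Sum>t\<in>T. f t / f a * (\<Sum>d\<in>S. V t d * ?m d))"
          by (subst sum.swap) (simp add: sum_distrib_left)
        also have "\<dots> = - (\<Sum>t\<in>T. f t / f a * ?m t)"
          using Vt by simp
        finally have vsum: "(\<Sum>d\<in>S. v d * ?m d) = - (\<Sum>t\<in>T. f t / f a * ?m t)" .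
        have "?m a + (\<Sum>t\<in>T. f t / f a * ?m t) = (f a * ?m a + (\<Sum>t\<in>T. f t * ?m t)) / f a"
        proof -
          have "(\<Sum>t\<in>T. f t / f a * ?m t) = (\<Sum>t\<in>T. f t * ?m t) / f a"
            by (simp add: sum_divide_distrib)
          then show ?thesis using fa by (simp add: add_divide_distrib)
        qed
        also have "\<dots> = 0" using fsum by simp
        finally have "?m a + (\<Sum>t\<in>T. f t / f a * ?m t) = 0" .
        then show "(\<Sum>d\<in>S. ((if d = a then 1 else 0) - v d) * ?m d) = 0"
          using delta_sum[OF S aS, of v ?m] vsum by simp
      qed
      then show ?thesis using vp vD by blast
    qed
  qed
qed


lemma remainder_prop:
  fixes \<Theta> :: "('n::finite \<Rightarrow> 'a::field) set"
  assumes mo: "monomial_order ord"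
  shows "is_poly (remainder ord \<Theta> a) \<and> {d. remainder ord \<Theta> a d \<noteq> 0} \<subseteq> delta_set ord \<Theta> \<and>
          (\<lambda>d. (if d = a then 1 else 0) - remainder ord \<Theta> a d) \<in> vanish_ideal \<Theta>"
proof -
  have ex: "\<exists>!v. is_poly v \<and> {d. v d \<noteq> 0} \<subseteq> delta_set ord \<Theta> \<and>
          (\<lambda>d. (if d = a then 1 else 0) - v d) \<in> vanish_ideal \<Theta>"
  proof (rule ex_ex1I)
    show "\<exists>v. is_poly v \<and> {d. v d \<noteq> 0} \<subseteq> delta_set ord \<Theta> \<and>
          (\<lambda>d. (if d = a then 1 else 0) - v d) \<in> vanish_ideal \<Theta>" by (rule nf_exists[OF mo])
  next
    fix v1 v2
    assume h1: "is_poly v1 \<and> {d. v1 d \<noteq> 0} \<subseteq> delta_set ord \<Theta> \<and>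
          (\<lambda>d. (if d = a then 1 else 0) - v1 d) \<in> vanish_ideal \<Theta>"
      and h2: "is_poly v2 \<and> {d. v2 d \<noteq> 0} \<subseteq> delta_set ord \<Theta> \<and>
          (\<lambda>d. (if d = a then 1 else 0) - v2 d) \<in> vanish_ideal \<Theta>"
    let ?w = "\<lambda>d. v1 d - v2 d"
    have "(\<lambda>d. ((if d = a then 1 else 0) - v2 d) - ((if d = a then 1 else 0) - v1 d)) \<in> vanish_ideal \<Theta>"
      using Z_diff h1 h2 by blast
    then have wZ: "?w \<in> vanish_ideal \<Theta>" by simp
    have wp: "is_poly ?w" using wZ by (simp add: vanish_ideal_def)
    have wD: "{d. ?w d \<noteq> 0} \<subseteq> delta_set ord \<Theta>"
    proof
      fix x assume "x \<in> {d. ?w d \<noteq> 0}"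
      then have "v1 x \<noteq> 0 \<or> v2 x \<noteq> 0" by auto
      then show "x \<in> delta_set ord \<Theta>" using h1 h2 by blast
    qed
    have "?w = (\<lambda>_. 0)" by (rule not_in_Z[OF mo wp wD wZ])
    then show "v1 = v2" by (metis (no_types, lifting) eq_iff_diff_eq_0 ext)
  qed
  show ?thesis unfolding remainder_def by (rule theI'[OF ex])
qed

lemma card_zero_outside:
  assumes "finite X"
  shows "card {g :: 'b \<Rightarrow> 'a::{finite,zero}. \<forall>x. x \<notin> X \<longrightarrow> g x = 0} = card (UNIV :: 'a set) ^ card X"
proof -
  have "bij_betw (\<lambda>g. restrict g X) {g :: 'b \<Rightarrow> 'a. \<forall>x. x \<notin> X \<longrightarrow> g x = 0} (X \<rightarrow>\<^sub>E (UNIV :: 'a set))"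
  proof (rule bij_betwI[where g = "\<lambda>h x. if x \<in> X then h x else 0"])
    show "(\<lambda>g. restrict g X) \<in> {g. \<forall>x. x \<notin> X \<longrightarrow> g x = 0} \<rightarrow> X \<rightarrow>\<^sub>E UNIV" by auto
    show "(\<lambda>h x. if x \<in> X then h x else 0) \<in> (X \<rightarrow>\<^sub>E UNIV) \<rightarrow> {g :: 'b \<Rightarrow> 'a. \<forall>x. x \<notin> X \<longrightarrow> g x = 0}" by auto
    show "\<And>g. g \<in> {g :: 'b \<Rightarrow> 'a. \<forall>x. x \<notin> X \<longrightarrow> g x = 0} \<Longrightarrow> (\<lambda>x. if x \<in> X then restrict g X x else 0) = g"
      by auto
    show "\<And>h. h \<in> X \<rightarrow>\<^sub>E (UNIV :: 'a set) \<Longrightarrow> restrict (\<lambda>x. if x \<in> X then h x else 0) X = h"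
      by (auto simp: restrict_def PiE_def extensional_def)
  qed
  then have "card {g :: 'b \<Rightarrow> 'a. \<forall>x. x \<notin> X \<longrightarrow> g x = 0} = card (X \<rightarrow>\<^sub>E (UNIV :: 'a set))"
    by (rule bij_betw_same_card)
  also have "\<dots> = card (UNIV :: 'a set) ^ card X" by (rule card_funcsetE[OF assms])
  finally show ?thesis .
qed

lemma card_field_ge2: "2 \<le> card (UNIV :: 'a::{finite,field} set)"
proof -
  have "card {0::'a, 1} = 2" by simp
  moreover have "card {0::'a, 1} \<le> card (UNIV :: 'a set)" by (rule card_mono) auto
  ultimately show ?thesis by simp
qed

lemma delta_card_le:
  fixes \<Theta> :: "('n::finite \<Rightarrow> 'a::{finite,field}) set"
  assumes mo: "monomial_order ord" and S: "finite S" "S \<subseteq> delta_set ord \<Theta>"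
  shows "card S \<le> card \<Theta>"
proof -
  let ?L = "{l :: ('n \<Rightarrow> nat) \<Rightarrow> 'a. \<forall>d. d \<notin> S \<longrightarrow> l d = 0}"
  let ?G = "{g :: ('n \<Rightarrow> 'a) \<Rightarrow> 'a. \<forall>x. x \<notin> \<Theta> \<longrightarrow> g x = 0}"
  let ?F = "\<lambda>l \<theta>. if \<theta> \<in> \<Theta> then (\<Sum>d\<in>S. l d * mono_val \<theta> d) else 0"
  have "inj_on ?F ?L"
  proof (rule inj_onI)
    fix l1 l2 assume l1: "l1 \<in> ?L" and l2: "l2 \<in> ?L" and eq: "?F l1 = ?F l2"
    let ?w = "\<lambda>d. l1 d - l2 d"
    have sp: "{d. ?w d \<noteq> 0} \<subseteq> S"
    proof
      fix x assume x: "x \<in> {d. ?w d \<noteq> 0}"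
      show "x \<in> S"
      proof (rule ccontr)
        assume "x \<notin> S"
        then have "l1 x = 0" "l2 x = 0" using l1 l2 by auto
        then show False using x by simp
      qed
    qed
    have wp: "is_poly ?w" using sp S(1) finite_subset by (auto simp: is_poly_def)
    have wD: "{d. ?w d \<noteq> 0} \<subseteq> delta_set ord \<Theta>" using sp S(2) by auto
    have wZ: "?w \<in> vanish_ideal \<Theta>"
    proof (subst Z_iff[OF S(1) sp], intro ballI)
      fix \<theta> assume "\<theta> \<in> \<Theta>"
      then have "(\<Sum>d\<in>S. l1 d * mono_val \<theta> d) = (\<Sum>d\<in>S. l2 d * mono_val \<theta> d)"
        using fun_cong[OF eq, of \<theta>] by simp
      then show "(\<Sum>d\<in>S. (l1 d - l2 d) * mono_val \<theta> d) = 0"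
        by (simp add: left_diff_distrib sum_subtractf)
    qed
    have "?w = (\<lambda>_. 0)" by (rule not_in_Z[OF mo wp wD wZ])
    then show "l1 = l2" by (metis (no_types, lifting) eq_iff_diff_eq_0 ext)
  qed
  moreover have "?F ` ?L \<subseteq> ?G" by auto
  moreover have "finite ?G" by simp
  ultimately have "card ?L \<le> card ?G" by (rule card_inj_on_le)
  then have "card (UNIV :: 'a set) ^ card S \<le> card (UNIV :: 'a set) ^ card \<Theta>"
    using card_zero_outside[OF S(1), where 'a='a] card_zero_outside[of \<Theta>, where 'a='a] by simp
  then show ?thesis using card_field_ge2[where 'a='a]
    by (simp add: power_le_imp_le_exp)
qed

lemma delta_finite:
  fixes \<Theta> :: "('n::finite \<Rightarrow> 'a::{finite,field}) set"
  assumes mo: "monomial_order ord"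
  shows "finite (delta_set ord \<Theta>)"
proof (rule ccontr)
  assume "infinite (delta_set ord \<Theta>)"
  then obtain S where "finite S" "card S = Suc (card \<Theta>)" "S \<subseteq> delta_set ord \<Theta>"
    using infinite_arbitrarily_large by blast
  then show False using delta_card_le[OF mo] by fastforce
qed

lemma remainder_eval:
  fixes \<Theta> :: "('n::finite \<Rightarrow> 'a::{finite,field}) set"
  assumes mo: "monomial_order ord" and th: "\<theta> \<in> \<Theta>"
  shows "mono_val \<theta> a = (\<Sum>d\<in>delta_set ord \<Theta>. remainder ord \<Theta> a d * mono_val \<theta> d)"
proof -
  let ?D = "delta_set ord \<Theta>"
  let ?r = "remainder ord \<Theta> a"
  have D: "finite ?D" by (rule delta_finite[OF mo])
  define S where "S = insert a ?D"
  have S: "finite S" "a \<in> S" using D by (auto simp: S_def)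
  have rp: "{d. ?r d \<noteq> 0} \<subseteq> ?D" "(\<lambda>d. (if d = a then 1 else 0) - ?r d) \<in> vanish_ideal \<Theta>"
    using remainder_prop[OF mo] by blast+
  have sp: "{d. (if d = a then 1 else 0) - ?r d \<noteq> 0} \<subseteq> S" using rp(1) by (auto simp: S_def split: if_splits)
  have "(\<Sum>d\<in>S. ((if d = a then 1 else 0) - ?r d) * mono_val \<theta> d) = 0"
    using Z_iff[OF S(1) sp] rp(2) th by blast
  then have "mono_val \<theta> a = (\<Sum>d\<in>S. ?r d * mono_val \<theta> d)" using delta_sum[OF S, of ?r "mono_val \<theta>"] by simp
  also have "\<dots> = (\<Sum>d\<in>?D. ?r d * mono_val \<theta> d)"
    by (rule sum.mono_neutral_right) (use S rp(1) in \<open>auto simp: S_def\<close>)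
  finally show ?thesis .
qed


inductive pf :: "(('n::finite \<Rightarrow> 'a::field) \<Rightarrow> 'a) \<Rightarrow> bool" where
  pf_mono: "pf (\<lambda>\<theta>. mono_val \<theta> d)"
| pf_add: "pf p \<Longrightarrow> pf q \<Longrightarrow> pf (\<lambda>\<theta>. p \<theta> + q \<theta>)"
| pf_smult: "pf p \<Longrightarrow> pf (\<lambda>\<theta>. k * p \<theta>)"
| pf_mult: "pf p \<Longrightarrow> pf q \<Longrightarrow> pf (\<lambda>\<theta>. p \<theta> * q \<theta>)"

lemma pf_orth:
  assumes "pf p"
  shows "\<forall>g. (\<forall>a. (\<Sum>\<theta>\<in>\<Theta>. g \<theta> * mono_val \<theta> a) = 0) \<longrightarrow> (\<Sum>\<theta>\<in>\<Theta>. g \<theta> * p \<theta>) = 0"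
  using assms
proof induction
  case (pf_mono d) then show ?case by auto
next
  case (pf_add p q) then show ?case by (simp add: distrib_left sum.distrib)
next
  case (pf_smult p k)
  show ?case
  proof (intro allI impI)
    fix g assume "\<forall>a. (\<Sum>\<theta>\<in>\<Theta>. g \<theta> * mono_val \<theta> a) = 0"
    then have "(\<Sum>\<theta>\<in>\<Theta>. g \<theta> * p \<theta>) = 0" using pf_smult.IH by blast
    then have "k * (\<Sum>\<theta>\<in>\<Theta>. g \<theta> * p \<theta>) = 0" by simp
    then show "(\<Sum>\<theta>\<in>\<Theta>. g \<theta> * (k * p \<theta>)) = 0" by (simp add: sum_distrib_left ac_simps)
  qed
next
  case (pf_mult p q)
  show ?case
  proof (intro allI impI)
    fix g assume H: "\<forall>a. (\<Sum>\<theta>\<in>\<Theta>. g \<theta> * mono_val \<theta> a) = 0"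
    have "\<forall>a. (\<Sum>\<theta>\<in>\<Theta>. (g \<theta> * p \<theta>) * mono_val \<theta> a) = 0"
    proof
      fix a
      have "(\<Sum>\<theta>\<in>\<Theta>. (g \<theta> * mono_val \<theta> a) * mono_val \<theta> b) = 0" for b
        using H[rule_format, of "\<lambda>i. a i + b i"] by (simp add: mono_val_add mult.assoc)
      hence "(\<Sum>\<theta>\<in>\<Theta>. (g \<theta> * mono_val \<theta> a) * p \<theta>) = 0"
        using pf_mult.IH(1)[rule_format, of "\<lambda>\<theta>. g \<theta> * mono_val \<theta> a"] by simp
      thus "(\<Sum>\<theta>\<in>\<Theta>. (g \<theta> * p \<theta>) * mono_val \<theta> a) = 0" by (simp add: ac_simps)
    qed
    hence "(\<Sum>\<theta>\<in>\<Theta>. (g \<theta> * p \<theta>) * q \<theta>) = 0"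
      using pf_mult.IH(2)[rule_format, of "\<lambda>\<theta>. g \<theta> * p \<theta>"] by simp
    thus "(\<Sum>\<theta>\<in>\<Theta>. g \<theta> * (p \<theta> * q \<theta>)) = 0" by (simp add: ac_simps)
  qed
qed

lemma pf_const: "pf (\<lambda>\<theta>. k)"
  using pf_smult[OF pf_mono[of "\<lambda>_. 0"], of k] by (simp add: mono_val_zero)

lemma pf_lin: "pf (\<lambda>\<theta>. \<theta> i - c)"
proof -
  have "pf (\<lambda>\<theta>. mono_val \<theta> (\<lambda>j. if j = i then 1 else 0) + (- c))"
    by (rule pf_add[OF pf_mono pf_const])
  then show ?thesis by (simp add: mono_val_unit)
qed

lemma pf_prod:
  assumes "finite X" "\<forall>x\<in>X. pf (F x)"
  shows "pf (\<lambda>\<theta>. \<Prod>x\<in>X. F x \<theta>)"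
  using assms
proof (induction X rule: finite_induct)
  case empty then show ?case by (simp add: pf_const)
next
  case (insert x X)
  then show ?case using pf_mult[of "F x" "\<lambda>\<theta>. \<Prod>x\<in>X. F x \<theta>"] by simp
qed

lemma P_inj:
  fixes \<Theta> :: "('n::finite \<Rightarrow> 'a::{finite,field}) set"
  assumes mo: "monomial_order ord"
    and H: "\<forall>d\<in>delta_set ord \<Theta>. (\<Sum>\<theta>\<in>\<Theta>. g \<theta> * mono_val \<theta> d) = 0" and p0: "\<phi>0 \<in> \<Theta>"
  shows "g \<phi>0 = 0"
proof -
  let ?D = "delta_set ord \<Theta>"
  have all: "\<forall>a. (\<Sum>\<theta>\<in>\<Theta>. g \<theta> * mono_val \<theta> a) = 0"
  proof
    fix a
    have "(\<Sum>\<theta>\<in>\<Theta>. g \<theta> * mono_val \<theta> a) =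
          (\<Sum>\<theta>\<in>\<Theta>. g \<theta> * (\<Sum>d\<in>?D. remainder ord \<Theta> a d * mono_val \<theta> d))"
    proof (rule sum.cong)
      fix \<theta> assume "\<theta> \<in> \<Theta>"
      then show "g \<theta> * mono_val \<theta> a = g \<theta> * (\<Sum>d\<in>?D. remainder ord \<Theta> a d * mono_val \<theta> d)"
        using remainder_eval[OF mo, of \<theta> \<Theta> a] by simp
    qed simp
    also have "\<dots> = (\<Sum>d\<in>?D. remainder ord \<Theta> a d * (\<Sum>\<theta>\<in>\<Theta>. g \<theta> * mono_val \<theta> d))"
      by (simp add: sum_distrib_left ac_simps sum.swap[of _ \<Theta>])
    also have "\<dots> = 0" using H by simp
    finally show "(\<Sum>\<theta>\<in>\<Theta>. g \<theta> * mono_val \<theta> a) = 0" .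
  qed
  define ix where "ix = (\<lambda>\<psi>. SOME i. \<psi> i \<noteq> \<phi>0 i)"
  have ix: "\<psi> (ix \<psi>) \<noteq> \<phi>0 (ix \<psi>)" if "\<psi> \<noteq> \<phi>0" for \<psi>
  proof -
    obtain i where "\<psi> i \<noteq> \<phi>0 i" using \<open>\<psi> \<noteq> \<phi>0\<close> by auto
    then show ?thesis unfolding ix_def by (rule someI)
  qed
  define p where "p = (\<lambda>\<theta>. \<Prod>\<psi>\<in>\<Theta> - {\<phi>0}. \<theta> (ix \<psi>) - \<psi> (ix \<psi>))"
  have pp: "pf p" unfolding p_def by (rule pf_prod) (auto intro: pf_lin)
  have "(\<Sum>\<theta>\<in>\<Theta>. g \<theta> * p \<theta>) = 0" using pf_orth[OF pp] all by blast
  moreover have "(\<Sum>\<theta>\<in>\<Theta>. g \<theta> * p \<theta>) = g \<phi>0 * p \<phi>0 + (\<Sum>\<theta>\<in>\<Theta> - {\<phi>0}. g \<theta> * p \<theta>)"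
    using p0 by (simp add: sum.remove)
  moreover have "(\<Sum>\<theta>\<in>\<Theta> - {\<phi>0}. g \<theta> * p \<theta>) = 0"
  proof (rule sum.neutral, intro ballI)
    fix \<theta> assume th: "\<theta> \<in> \<Theta> - {\<phi>0}"
    have "p \<theta> = 0" unfolding p_def
      by (rule prod_zero) (use th in \<open>auto intro!: bexI[of _ \<theta>]\<close>)
    then show "g \<theta> * p \<theta> = 0" by simp
  qed
  moreover have "p \<phi>0 \<noteq> 0" unfolding p_def
    using ix by (auto simp: prod_zero_iff) (metis)
  ultimately show ?thesis by simp
qed

lemma C_map_eq:
  fixes \<Phi> :: "('n::finite \<Rightarrow> 'a::{finite,field}) set"
  assumes mo: "monomial_order ord"
    and H: "\<forall>d\<in>delta_set ord \<Phi>. rt d = (\<Sum>\<phi>\<in>\<Phi>. e \<phi> * mono_val \<phi> d)"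
  shows "C_map ord \<Phi> rt = (\<lambda>x. if x \<in> \<Phi> then e x else 0)"
  unfolding C_map_def
proof (rule the_equality)
  let ?c0 = "\<lambda>x. if x \<in> \<Phi> then e x else 0"
  have P0: "P_map \<Phi> ?c0 d = (\<Sum>\<phi>\<in>\<Phi>. e \<phi> * mono_val \<phi> d)" for d
    unfolding P_map_def by (rule sum.cong) auto
  show "(\<forall>x. x \<notin> \<Phi> \<longrightarrow> ?c0 x = 0) \<and> (\<forall>d\<in>delta_set ord \<Phi>. P_map \<Phi> ?c0 d = rt d)"
    using P0 H by auto
  fix c' assume c': "(\<forall>x. x \<notin> \<Phi> \<longrightarrow> c' x = 0) \<and> (\<forall>d\<in>delta_set ord \<Phi>. P_map \<Phi> c' d = rt d)"
  have "\<forall>d\<in>delta_set ord \<Phi>. (\<Sum>\<theta>\<in>\<Phi>. (c' \<theta> - ?c0 \<theta>) * mono_val \<theta> d) = 0"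
  proof
    fix d assume d: "d \<in> delta_set ord \<Phi>"
    have "(\<Sum>\<theta>\<in>\<Phi>. (c' \<theta> - ?c0 \<theta>) * mono_val \<theta> d) = P_map \<Phi> c' d - P_map \<Phi> ?c0 d"
      unfolding P_map_def by (simp add: left_diff_distrib sum_subtractf)
    also have "\<dots> = 0" using c' d P0 H by simp
    finally show "(\<Sum>\<theta>\<in>\<Phi>. (c' \<theta> - ?c0 \<theta>) * mono_val \<theta> d) = 0" .
  qed
  then have "\<And>x. x \<in> \<Phi> \<Longrightarrow> c' x - ?c0 x = 0" using P_inj[OF mo, of \<Phi> "\<lambda>\<theta>. c' \<theta> - ?c0 \<theta>"] by blast
  then show "c' = ?c0" using c' by (auto simp: fun_eq_iff)
qed


theorem mainTheorem8:
  fixes ord :: "('n::finite \<Rightarrow> nat) \<Rightarrow> ('n \<Rightarrow> nat) \<Rightarrow> bool"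
    and \<Psi> \<Phi> :: "('n \<Rightarrow> 'a::{finite,field}) set"
    and B :: "('n \<Rightarrow> nat) set"
    and c e :: "('n \<Rightarrow> 'a) \<Rightarrow> 'a"
  assumes "monomial_order ord"
    and "\<Psi> \<noteq> {}"
    and "B \<subseteq> delta_set ord \<Psi>"
    and "c \<in> Cperp B \<Psi>"
    and "\<Phi> \<noteq> {}" and "\<Phi> \<subseteq> \<Psi>"
    and "delta_set ord \<Phi> \<subseteq> B"
    and "\<forall>\<psi>\<in>\<Psi>. \<psi> \<notin> \<Phi> \<longrightarrow> e \<psi> = 0"
  shows "let h = P_map \<Psi> c; r = (\<lambda>\<psi>. c \<psi> + e \<psi>); rt = P_map \<Psi> r in
      (\<forall>b\<in>B. h b = 0 \<and> rt b = (\<Sum>\<phi>\<in>\<Phi>. e \<phi> * mono_val \<phi> b)) \<and>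
      (\<forall>d\<in>delta_set ord \<Psi>. h d = rt d - ext_map ord \<Phi> rt d) \<and>
      (\<forall>\<phi>\<in>\<Phi>. C_map ord \<Phi> rt \<phi> = e \<phi>) \<and>
      (\<forall>\<psi>\<in>\<Psi>. c \<psi> = r \<psi> - (if \<psi> \<in> \<Phi> then C_map ord \<Phi> rt \<psi> else 0))"
proof -
  note mo = assms(1)
  define h where "h = P_map \<Psi> c"
  define r where "r = (\<lambda>\<psi>. c \<psi> + e \<psi>)"
  define rt where "rt = P_map \<Psi> r"
  have eS: "(\<Sum>\<psi>\<in>\<Psi>. e \<psi> * mono_val \<psi> d) = (\<Sum>\<phi>\<in>\<Phi>. e \<phi> * mono_val \<phi> d)" for d
    by (rule sum.mono_neutral_right) (use assms(6,8) in auto)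
  have rtd: "rt d = h d + (\<Sum>\<phi>\<in>\<Phi>. e \<phi> * mono_val \<phi> d)" for d
    unfolding rt_def h_def P_map_def r_def by (simp add: distrib_right sum.distrib eS)
  have hB: "h b = 0" if "b \<in> B" for b
    using assms(4) that unfolding h_def P_map_def Cperp_def by blast
  have i: "\<forall>b\<in>B. h b = 0 \<and> rt b = (\<Sum>\<phi>\<in>\<Phi>. e \<phi> * mono_val \<phi> b)"
    using hB rtd by simp
  have rtD: "\<forall>d\<in>delta_set ord \<Phi>. rt d = (\<Sum>\<phi>\<in>\<Phi>. e \<phi> * mono_val \<phi> d)"
    using i assms(7) by blast
  have ii: "h d = rt d - ext_map ord \<Phi> rt d" for d
  proof -
    let ?D = "delta_set ord \<Phi>"
    have "ext_map ord \<Phi> rt d = (\<Sum>d'\<in>?D. remainder ord \<Phi> d d' * (\<Sum>\<phi>\<in>\<Phi>. e \<phi> * mono_val \<phi> d'))"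
      unfolding ext_map_def by (rule sum.cong) (use rtD in auto)
    also have "\<dots> = (\<Sum>\<phi>\<in>\<Phi>. e \<phi> * (\<Sum>d'\<in>?D. remainder ord \<Phi> d d' * mono_val \<phi> d'))"
      by (simp add: sum_distrib_left ac_simps sum.swap[of _ ?D])
    also have "\<dots> = (\<Sum>\<phi>\<in>\<Phi>. e \<phi> * mono_val \<phi> d)"
    proof (rule sum.cong)
      fix \<phi> assume "\<phi> \<in> \<Phi>"
      then show "e \<phi> * (\<Sum>d'\<in>?D. remainder ord \<Phi> d d' * mono_val \<phi> d') = e \<phi> * mono_val \<phi> d"
        using remainder_eval[OF mo, of \<phi> \<Phi> d] by simp
    qed simp
    finally show ?thesis using rtd by simp
  qed
  have C: "C_map ord \<Phi> rt = (\<lambda>x. if x \<in> \<Phi> then e x else 0)"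
    by (rule C_map_eq[OF mo rtD])
  have iv: "\<forall>\<psi>\<in>\<Psi>. c \<psi> = r \<psi> - (if \<psi> \<in> \<Phi> then C_map ord \<Phi> rt \<psi> else 0)"
    using assms(8) by (simp add: C r_def)
  have iii: "\<forall>\<phi>\<in>\<Phi>. C_map ord \<Phi> rt \<phi> = e \<phi>" using C by simp
  have ii': "\<forall>d\<in>delta_set ord \<Psi>. h d = rt d - ext_map ord \<Phi> rt d" using ii by blast
  show ?thesis
    unfolding Let_def r_def[symmetric] rt_def[symmetric] h_def[symmetric]
    using i ii' iii iv by (intro conjI)
qed

end
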